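(* Let $G=(R,B,2,(\succsim_a)_{a\in R\cup B})$ be a roommate diversity game with room size $2$. Let $G_m$ be the complete undirected graph on vertex set $R\cup B$ in which the edge $\{a,b\}$ has weight $w(a,b)\in\{0,1,2\}$ equal to the number of agents among $a,b$ that are happy in the room $\{a,b\}$. Then every maximum weight perfect matching $M_*$ of $G_m$, viewed as an outcome of $G$ (each matched pair forms a room), is popular.
   Context: A roommate diversity game is a quadruple $G=(R,B,s,(\succsim_a)_{a\in R\cup B})$ where $R$ (red agents) and $B$ (blue agents) are disjoint finite sets, $s\in\mathbb{N}^+$ is the room size, $|R\cup B|=ks$ for some $k\in\mathbb{N}$, and each $\succsim_a$ is a complete transitive weak order on $D=\{j/s : j\in\{0,\dots,s\}\}$. An outcome is a partition $\pi$ of $N=R\cup B$ into $k$ rooms of size $s$; $\pi(a)$ is the room containing $a$, and $\theta(C)=|C\cap R|/|C|$ is the fraction of red agents of a room $C$. Agent $a$ prefers $\pi$ to $\pi'$ if $\theta(\pi(a))\succsim_a\theta(\pi'(a))$ and not $\theta(\pi'(a))\succsim_a\theta(\pi(a))$. Let $N(\pi,\pi')$ be the set of agents preferring $\pi$ to $\pi'$ and $\phi(\pi,\pi')=|N(\pi,\pi')|-|N(\pi',\pi)|$. An outcome $\pi$ is popular if $\phi(\pi,\pi')\ge 0$ for every outcome $\pi'$. For room size $2$, a red agent can only be in rooms of fraction $1/2$ or $1$, and a blue agent only in rooms of fraction $0$ or $1/2$; preferences over the impossible fraction are disregarded. An agent is happy in a room if the fraction of that room is weakly preferred by the agent to every fraction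 possible for its color (i.e. $\{1/2,1\}$ for red, $\{0,1/2\}$ for blue); otherwise it is sad. *)

theory Defs
  imports Main "HOL-Library.Disjoint_Sets" Complex_Main
begin

text \<open>Fractions of red agents possible in a room of size s.\<close>
definition fracs :: "nat \<Rightarrow> real set" where
  "fracs s = {real j / real s | j. j \<le> s}"

definition rdg :: "'a set \<Rightarrow> 'a set \<Rightarrow> nat \<Rightarrow> ('a \<Rightarrow> real \<Rightarrow> real \<Rightarrow> bool) \<Rightarrow> bool" where
  "rdg R B s pref \<longleftrightarrow> finite R \<and> finite B \<and> R \<inter> B = {} \<and> s > 0 \<and>
     s dvd card (R \<union> B) \<and>
     (\<forall>a \<in> R \<union> B.
        (\<forall>x\<in>fracs s. \<forall>y\<in>fracs s. pref a x y \<or> pref a y x) \<and>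
        (\<forall>x\<in>fracs s. \<forall>y\<in>fracs s. \<forall>z\<in>fracs s. pref a x y \<longrightarrow> pref a y z \<longrightarrow> pref a x z))"

definition outcome :: "'a set \<Rightarrow> nat \<Rightarrow> 'a set set \<Rightarrow> bool" where
  "outcome N s \<pi> \<longleftrightarrow> partition_on N \<pi> \<and> (\<forall>C\<in>\<pi>. card C = s)"

definition room :: "'a set set \<Rightarrow> 'a \<Rightarrow> 'a set" where
  "room \<pi> a = (THE C. C \<in> \<pi> \<and> a \<in> C)"

definition theta :: "'a set \<Rightarrow> 'a set \<Rightarrow> real" where
  "theta R C = real (card (C \<inter> R)) / real (card C)"

definition prefers :: "'a set \<Rightarrow> ('a \<Rightarrow> real \<Rightarrow> real \<Rightarrow> bool) \<Rightarrow> 'a \<Rightarrow> 'a set set \<Rightarrow> 'a set set \<Rightarrow> bool" where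
  "prefers R pref a \<pi> \<pi>' \<longleftrightarrow>
     pref a (theta R (room \<pi> a)) (theta R (room \<pi>' a)) \<and>
     \<not> pref a (theta R (room \<pi>' a)) (theta R (room \<pi> a))"

definition phi :: "'a set \<Rightarrow> 'a set \<Rightarrow> ('a \<Rightarrow> real \<Rightarrow> real \<Rightarrow> bool) \<Rightarrow> 'a set set \<Rightarrow> 'a set set \<Rightarrow> int" where
  "phi R B pref \<pi> \<pi>' =
     int (card {a \<in> R \<union> B. prefers R pref a \<pi> \<pi>'}) - int (card {a \<in> R \<union> B. prefers R pref a \<pi>' \<pi>})"

definition popular :: "'a set \<Rightarrow> 'a set \<Rightarrow> nat \<Rightarrow> ('a \<Rightarrow> real \<Rightarrow> real \<Rightarrow> bool) \<Rightarrow> 'a set set \<Rightarrow> bool" where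
  "popular R B s pref \<pi> \<longleftrightarrow> outcome (R \<union> B) s \<pi> \<and>
     (\<forall>\<pi>'. outcome (R \<union> B) s \<pi>' \<longrightarrow> phi R B pref \<pi> \<pi>' \<ge> 0)"

definition possible2 :: "'a set \<Rightarrow> 'a \<Rightarrow> real set" where
  "possible2 R a = (if a \<in> R then {1/2, 1} else {0, 1/2})"

definition happy :: "'a set \<Rightarrow> ('a \<Rightarrow> real \<Rightarrow> real \<Rightarrow> bool) \<Rightarrow> 'a \<Rightarrow> 'a set \<Rightarrow> bool" where
  "happy R pref a C \<longleftrightarrow> (\<forall>x\<in>possible2 R a. pref a (theta R C) x)"

definition wt :: "'a set \<Rightarrow> ('a \<Rightarrow> real \<Rightarrow> real \<Rightarrow> bool) \<Rightarrow> 'a set \<Rightarrow> nat" where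
  "wt R pref e = card {x \<in> e. happy R pref x e}"

definition perfect_matching :: "'a set \<Rightarrow> 'a set set \<Rightarrow> bool" where
  "perfect_matching N M \<longleftrightarrow> M \<subseteq> {e. e \<subseteq> N \<and> card e = 2} \<and> (\<forall>v\<in>N. \<exists>!e. e \<in> M \<and> v \<in> e)"

definition max_weight_pm :: "'a set \<Rightarrow> ('a \<Rightarrow> real \<Rightarrow> real \<Rightarrow> bool) \<Rightarrow> 'a set \<Rightarrow> 'a set set \<Rightarrow> bool" where
  "max_weight_pm R pref N M \<longleftrightarrow> perfect_matching N M \<and>
     (\<forall>M'. perfect_matching N M' \<longrightarrow> (\<Sum>e\<in>M'. wt R pref e) \<le> (\<Sum>e\<in>M. wt R pref e))"

end

theory Submission
  imports Defs
begin

lemma room_eq: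
  assumes "partition_on N \<pi>" "e \<in> \<pi>" "a \<in> e"
  shows "room \<pi> a = e"
  unfolding room_def
proof (rule the_equality)
  show "e \<in> \<pi> \<and> a \<in> e" using assms by simp
next
  fix C assume "C \<in> \<pi> \<and> a \<in> C"
  then have "C \<in> \<pi>" "a \<in> C" by auto
  have d: "\<forall>x\<in>\<pi>. \<forall>y\<in>\<pi>. x \<noteq> y \<longrightarrow> x \<inter> y = {}"
    using partition_onD2[OF assms(1)] unfolding disjoint_def by simp
  show "C = e"
  proof (rule ccontr)
    assume "C \<noteq> e"
    then have "C \<inter> e = {}" using d \<open>C \<in> \<pi>\<close> assms(2) by blast
    then show False using \<open>a \<in> C\<close> assms(3) by blast
  qed
qed

lemma room_in:
  assumes "partition_on N \<pi>" "a \<in> N"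
  shows "room \<pi> a \<in> \<pi> \<and> a \<in> room \<pi> a"
proof -
  have "a \<in> \<Union>\<pi>" using assms partition_onD1 by fastforce
  then obtain e where "e \<in> \<pi>" "a \<in> e" by blast
  then show ?thesis using room_eq[OF assms(1)] by simp
qed

lemma outcome_pm:
  assumes "outcome N 2 \<pi>"
  shows "perfect_matching N \<pi>"
proof -
  have p: "partition_on N \<pi>" and c: "\<forall>C\<in>\<pi>. card C = 2" using assms outcome_def by auto
  show ?thesis unfolding perfect_matching_def
  proof
    show "\<pi> \<subseteq> {e. e \<subseteq> N \<and> card e = 2}" using p c partition_onD1 by auto
    show "\<forall>v\<in>N. \<exists>!e. e \<in> \<pi> \<and> v \<in> e"
    proof
      fix v assume v: "v \<in> N"
      show "\<exists>!e. e \<in> \<pi> \<and> v \<in> e"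
      proof (rule ex1I)
        show "room \<pi> v \<in> \<pi> \<and> v \<in> room \<pi> v" by (rule room_in[OF p v])
      next
        fix e assume "e \<in> \<pi> \<and> v \<in> e"
        then show "e = room \<pi> v" using room_eq[OF p, of e v] by auto
      qed
    qed
  qed
qed

lemma pm_outcome:
  assumes "perfect_matching N \<pi>"
  shows "outcome N 2 \<pi>"
proof -
  have s: "\<pi> \<subseteq> {e. e \<subseteq> N \<and> card e = 2}"
    using assms unfolding perfect_matching_def by blast
  have u: "\<forall>v\<in>N. \<exists>!e. e \<in> \<pi> \<and> v \<in> e"
    using assms unfolding perfect_matching_def by blast
  have "partition_on N \<pi>" unfolding partition_on_def
  proof (intro conjI)
    show "\<Union> \<pi> = N"
    proof
      show "\<Union> \<pi> \<subseteq> N" using s by blast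
      show "N \<subseteq> \<Union> \<pi>"
      proof
        fix v assume "v \<in> N"
        then obtain e where "e \<in> \<pi>" "v \<in> e" using u by blast
        then show "v \<in> \<Union> \<pi>" by blast
      qed
    qed
    show "disjoint \<pi>" unfolding disjoint_def
    proof (intro ballI impI)
      fix x y assume xy: "x \<in> \<pi>" "y \<in> \<pi>" "x \<noteq> y"
      show "x \<inter> y = {}"
      proof (rule ccontr)
        assume "x \<inter> y \<noteq> {}"
        then obtain v where "v \<in> x" "v \<in> y" by blast
        moreover have "v \<in> N" using s xy \<open>v \<in> x\<close> by blast
        ultimately show False using u xy by blast
      qed
    qed
    show "{} \<notin> \<pi>" using s by fastforce
  qed
  then show ?thesis using s outcome_def by fastforce
qed

lemma theta_possible:
  assumes "card C = 2" "a \<in> C"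
  shows "theta R C \<in> possible2 R a"
proof -
  have fC: "finite C" using assms(1) card.infinite by fastforce
  have le: "card (C \<inter> R) \<le> 2" using assms fC by (metis card_mono inf_le1)
  show ?thesis
  proof (cases "a \<in> R")
    case True
    then have "card (C \<inter> R) \<ge> 1" using fC assms(2)
      by (metis IntI card_0_eq empty_iff finite_Int less_one linorder_not_le)
    then have "card (C \<inter> R) = 1 \<or> card (C \<inter> R) = 2" using le by linarith
    then show ?thesis using True assms(1) unfolding theta_def possible2_def by auto
  next
    case False
    have "C \<inter> R \<subseteq> C - {a}" using False by blast
    then have "card (C \<inter> R) \<le> card (C - {a})" using fC by (simp add: card_mono)
    also have "\<dots> = 1" using assms fC by simp
    finally have "card (C \<inter> R) = 0 \<or> card (C \<inter> R) = 1" by linarith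
    then show ?thesis using False assms(1) unfolding theta_def possible2_def by auto
  qed
qed

lemma possible_fracs: "possible2 R a \<subseteq> fracs 2"
proof -
  have "real 0 / real 2 \<in> fracs 2" "real 1 / real 2 \<in> fracs 2" "real 2 / real 2 \<in> fracs 2"
    unfolding fracs_def by (blast, (rule CollectI, rule exI[of _ 1], simp), (rule CollectI, rule exI[of _ 2], simp))
  then show ?thesis unfolding possible2_def by auto
qed

lemma pref_iff_gen:
  assumes "P = {p, q}" "t1 \<in> P" "t2 \<in> P"
    and comp: "\<forall>x\<in>P. \<forall>y\<in>P. r x y \<or> r y x"
  shows "(r t1 t2 \<and> \<not> r t2 t1) \<longleftrightarrow> ((\<forall>x\<in>P. r t1 x) \<and> \<not> (\<forall>x\<in>P. r t2 x))"
  using assms by blast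

lemma prefers_iff:
  assumes rdg: "rdg R B 2 pref" and a: "a \<in> R \<union> B"
    and p1: "partition_on (R \<union> B) \<pi>1" "\<forall>C\<in>\<pi>1. card C = 2"
    and p2: "partition_on (R \<union> B) \<pi>2" "\<forall>C\<in>\<pi>2. card C = 2"
  shows "prefers R pref a \<pi>1 \<pi>2 \<longleftrightarrow>
     happy R pref a (room \<pi>1 a) \<and> \<not> happy R pref a (room \<pi>2 a)"
proof -
  have t1: "theta R (room \<pi>1 a) \<in> possible2 R a"
  proof -
    have "room \<pi>1 a \<in> \<pi>1 \<and> a \<in> room \<pi>1 a" by (rule room_in[OF p1(1) a])
    then show ?thesis using p1(2) theta_possible[of "room \<pi>1 a" a R] by auto
  qed
  have t2: "theta R (room \<pi>2 a) \<in> possible2 R a"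
  proof -
    have "room \<pi>2 a \<in> \<pi>2 \<and> a \<in> room \<pi>2 a" by (rule room_in[OF p2(1) a])
    then show ?thesis using p2(2) theta_possible[of "room \<pi>2 a" a R] by auto
  qed
  have comp: "\<forall>x\<in>possible2 R a. \<forall>y\<in>possible2 R a. pref a x y \<or> pref a y x"
  proof (intro ballI)
    fix x y assume "x \<in> possible2 R a" "y \<in> possible2 R a"
    then have "x \<in> fracs 2" "y \<in> fracs 2" using possible_fracs[of R a] by auto
    moreover have "\<forall>x\<in>fracs 2. \<forall>y\<in>fracs 2. pref a x y \<or> pref a y x"
    proof -
      have "\<forall>a \<in> R \<union> B. (\<forall>x\<in>fracs 2. \<forall>y\<in>fracs 2. pref a x y \<or> pref a y x) \<and>
        (\<forall>x\<in>fracs 2. \<forall>y\<in>fracs 2. \<forall>z\<in>fracs 2. pref a x y \<longrightarrow> pref a y z \<longrightarrow> pref a x z)"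
        using rdg unfolding rdg_def by (elim conjE)
      then show ?thesis using a by blast
    qed
    ultimately show "pref a x y \<or> pref a y x" by blast
  qed
  obtain p q where pq: "possible2 R a = {p, q}" unfolding possible2_def by (cases "a \<in> R") auto
  show ?thesis
    unfolding prefers_def happy_def by (rule pref_iff_gen[OF pq t1 t2 comp])
qed

lemma card_happy:
  assumes fin: "finite N" and p: "partition_on N \<pi>" and c: "\<forall>C\<in>\<pi>. card C = 2"
  shows "card {a \<in> N. happy R pref a (room \<pi> a)} = (\<Sum>e\<in>\<pi>. wt R pref e)"
proof -
  have eq: "{a \<in> N. happy R pref a (room \<pi> a)} = (\<Union>e\<in>\<pi>. {x \<in> e. happy R pref x e})"
  proof
    show "{a \<in> N. happy R pref a (room \<pi> a)} \<subseteq> (\<Union>e\<in>\<pi>. {x \<in> e. happy R pref x e})"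
      using room_in[OF p] by blast
    show "(\<Union>e\<in>\<pi>. {x \<in> e. happy R pref x e}) \<subseteq> {a \<in> N. happy R pref a (room \<pi> a)}"
      using room_eq[OF p] partition_onD1[OF p] by blast
  qed
  have fpi: "finite \<pi>" using fin partition_onD1[OF p]
    by (metis finite_UnionD)
  have fe: "\<forall>e\<in>\<pi>. finite {x \<in> e. happy R pref x e}" using c card.infinite by fastforce
  have dj: "\<forall>e1\<in>\<pi>. \<forall>e2\<in>\<pi>. e1 \<noteq> e2 \<longrightarrow>
      {x \<in> e1. happy R pref x e1} \<inter> {x \<in> e2. happy R pref x e2} = {}"
    using p partition_onD2 unfolding disjoint_def pairwise_def disjnt_def by blast
  show ?thesis unfolding eq wt_def
    by (rule card_UN_disjoint[OF fpi fe dj])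
qed

lemma card_split:
  assumes "finite A"
  shows "card {a \<in> A. P a} = card {a \<in> A. P a \<and> \<not> Q a} + card {a \<in> A. P a \<and> Q a}"
proof -
  have e: "{a \<in> A. P a} = {a \<in> A. P a \<and> \<not> Q a} \<union> {a \<in> A. P a \<and> Q a}" by blast
  have "card ({a \<in> A. P a \<and> \<not> Q a} \<union> {a \<in> A. P a \<and> Q a})
      = card {a \<in> A. P a \<and> \<not> Q a} + card {a \<in> A. P a \<and> Q a}"
    by (rule card_Un_disjoint) (use assms in auto)
  then show ?thesis using e by simp
qed

lemma card_diff_int:
  assumes "finite A"
  shows "int (card {a \<in> A. P a \<and> \<not> Q a}) - int (card {a \<in> A. Q a \<and> \<not> P a})
       = int (card {a \<in> A. P a}) - int (card {a \<in> A. Q a})"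
proof -
  have 1: "card {a \<in> A. P a} = card {a \<in> A. P a \<and> \<not> Q a} + card {a \<in> A. P a \<and> Q a}"
    by (rule card_split[OF assms])
  have 2: "card {a \<in> A. Q a} = card {a \<in> A. Q a \<and> \<not> P a} + card {a \<in> A. Q a \<and> P a}"
    by (rule card_split[OF assms])
  have 3: "{a \<in> A. Q a \<and> P a} = {a \<in> A. P a \<and> Q a}" by blast
  have 4: "card {a \<in> A. Q a \<and> P a} = card {a \<in> A. P a \<and> Q a}" using 3 by (rule arg_cong)
  show ?thesis using 1 2 4 by linarith
qed

theorem mainTheorem1:
  fixes R B :: "'a set" and pref :: "'a \<Rightarrow> real \<Rightarrow> real \<Rightarrow> bool" and M :: "'a set set"
  assumes "rdg R B 2 pref"
    and "max_weight_pm R pref (R \<union> B) M"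
  shows "popular R B 2 pref M"
proof -
  let ?N = "R \<union> B"
  have fin: "finite ?N" using assms(1) rdg_def by auto
  have pmM: "perfect_matching ?N M" using assms(2) max_weight_pm_def by auto
  have oM: "outcome ?N 2 M" by (rule pm_outcome[OF pmM])
  have pM: "partition_on ?N M" "\<forall>C\<in>M. card C = 2" using oM outcome_def by auto
  show ?thesis unfolding popular_def
  proof (intro conjI allI impI)
    show "outcome ?N 2 M" by fact
    fix \<pi> assume o: "outcome ?N 2 \<pi>"
    have pP: "partition_on ?N \<pi>" "\<forall>C\<in>\<pi>. card C = 2" using o outcome_def by auto
    have le: "(\<Sum>e\<in>\<pi>. wt R pref e) \<le> (\<Sum>e\<in>M. wt R pref e)"
      using assms(2) outcome_pm[OF o] unfolding max_weight_pm_def by blast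
    have s1: "{a \<in> ?N. prefers R pref a M \<pi>} =
       {a \<in> ?N. happy R pref a (room M a) \<and> \<not> happy R pref a (room \<pi> a)}"
      using prefers_iff[OF assms(1) _ pM pP] by (intro Collect_cong) auto
    have s2: "{a \<in> ?N. prefers R pref a \<pi> M} =
       {a \<in> ?N. happy R pref a (room \<pi> a) \<and> \<not> happy R pref a (room M a)}"
      using prefers_iff[OF assms(1) _ pP pM] by (intro Collect_cong) auto
    have "phi R B pref M \<pi> = int (\<Sum>e\<in>M. wt R pref e) - int (\<Sum>e\<in>\<pi>. wt R pref e)"
      unfolding phi_def s1 s2 card_diff_int[OF fin] card_happy[OF fin pM] card_happy[OF fin pP]
      by (rule refl)
    moreover have "int (\<Sum>e\<in>\<pi>. wt R pref e) \<le> int (\<Sum>e\<in>M. wt R pref e)"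
      using le by (simp only: of_nat_le_iff)
    ultimately show "phi R B pref M \<pi> \<ge> 0" by linarith
  qed
qed

end
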